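(* The invariant functions $p_1,\dots,p_5$ are algebraically independent over $\mathbb C$ and $\mathbb C(\mathscr X_2)^G=\mathbb C(p_1,\dots,p_5)$.
   Context: Identify $V_1=V_2=\mathbb C^2$ with Pauli matrices $\sigma_1=\begin{pmatrix}0&1\\1&0\end{pmatrix}$, $\sigma_2=\begin{pmatrix}0&-i\\i&0\end{pmatrix}$, $\sigma_3=\begin{pmatrix}1&0\\0&-1\end{pmatrix}$. Trace-one endomorphisms of $\mathbb C^2\otimes\mathbb C^2$ are written uniquely as $\tfrac14\big(I\otimes I+\sum_a v_a\sigma_a\otimes I+\sum_b w_bI\otimes\sigma_b+\sum_{a,b}C_{ba}\sigma_a\otimes\sigma_b\big)$, giving coordinates $(v,w,C)\in\mathbb C^3\times\mathbb C^3\times M_3(\mathbb C)$ on the space $\mathscr L_2$; $G=\mathrm{SO}_3(\mathbb C)^2$ acts by $(g_1,g_2)\cdot(v,w,C)=(g_1v,g_2w,g_2Cg_1^{-1})$. $\langle x,y\rangle=\sum_a x_ay_a$ on $\mathbb C^3$. Let $X_0$ be the subspace with $v_1=v_2=w_1=w_2=0$ and $C_{ba}=0$ whenever exactly one of $a,b$ equals $3$; $\mathscr X_2$ is the Zariski closure of $G\cdot X_0$ (equivalently of the set of two-qubit X-states), with reduced structure. The functions $p_i$ are the restrictions to $\mathscr X_2$ of $p_1=\langle v,v\rangle$, $p_2=\langle w,w\rangle$, $p_3=\langle Cv,w\rangle$, $p_4=\operatorname{tr}(C^tC)$, $p_5=\det C$. *)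

theory Defs
  imports "HOL-Analysis.Analysis"
begin

inductive polyfn :: "('a \<Rightarrow> complex) set \<Rightarrow> ('a \<Rightarrow> complex) \<Rightarrow> bool"
  for Cs :: "('a \<Rightarrow> complex) set" where
  const: "polyfn Cs (\<lambda>x. c)"
| coord: "f \<in> Cs \<Longrightarrow> polyfn Cs f"
| add: "polyfn Cs f \<Longrightarrow> polyfn Cs g \<Longrightarrow> polyfn Cs (\<lambda>x. f x + g x)"
| mult: "polyfn Cs f \<Longrightarrow> polyfn Cs g \<Longrightarrow> polyfn Cs (\<lambda>x. f x * g x)"

text \<open>The space L_2 with coordinates (v, w, C); C $ b $ a is the entry C_{ba}.\<close>
type_synonym L2 = "(complex^3) \<times> (complex^3) \<times> (complex^3^3)"

definition L2_coords :: "(L2 \<Rightarrow> complex) set" where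
  "L2_coords = {(\<lambda>x::L2. fst x $ i) | i. True} \<union> {(\<lambda>x::L2. fst (snd x) $ i) | i. True}
     \<union> {(\<lambda>x::L2. snd (snd x) $ b $ a) | a b. True}"

definition L2_poly :: "(L2 \<Rightarrow> complex) \<Rightarrow> bool" where
  "L2_poly f = polyfn L2_coords f"

definition zariski_closure :: "L2 set \<Rightarrow> L2 set" where
  "zariski_closure S = {x. \<forall>f. L2_poly f \<longrightarrow> (\<forall>y\<in>S. f y = 0) \<longrightarrow> f x = 0}"

definition SO3 :: "(complex^3^3) set" where
  "SO3 = {g. transpose g ** g = mat 1 \<and> det g = 1}"

definition Grp :: "((complex^3^3) \<times> (complex^3^3)) set" where
  "Grp = SO3 \<times> SO3"

fun act :: "(complex^3^3) \<times> (complex^3^3) \<Rightarrow> L2 \<Rightarrow> L2" where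
  "act (g1, g2) (v, w, C) = (g1 *v v, g2 *v w, g2 ** C ** matrix_inv g1)"

definition X0 :: "L2 set" where
  "X0 = {(v, w, C). v $ 1 = 0 \<and> v $ 2 = 0 \<and> w $ 1 = 0 \<and> w $ 2 = 0 \<and>
           (\<forall>a b. ((a = 3) \<noteq> (b = 3)) \<longrightarrow> C $ b $ a = 0)}"

definition X2 :: "L2 set" where
  "X2 = zariski_closure (\<Union>h\<in>Grp. act h ` X0)"

definition bil :: "complex^3 \<Rightarrow> complex^3 \<Rightarrow> complex" where
  "bil x y = (\<Sum>a\<in>UNIV. x $ a * y $ a)"

fun p1 :: "L2 \<Rightarrow> complex" where "p1 (v, w, C) = bil v v"
fun p2 :: "L2 \<Rightarrow> complex" where "p2 (v, w, C) = bil w w"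
fun p3 :: "L2 \<Rightarrow> complex" where "p3 (v, w, C) = bil (C *v v) w"
fun p4 :: "L2 \<Rightarrow> complex" where "p4 (v, w, C) = trace (transpose C ** C)"
fun p5 :: "L2 \<Rightarrow> complex" where "p5 (v, w, C) = det C"

text \<open>The map x \<mapsto> (p1 x, ..., p5 x), with points of C^5 as functions nat \<Rightarrow> complex
  (only the coordinates 0..4 are used).\<close>
definition pmap :: "L2 \<Rightarrow> (nat \<Rightarrow> complex)" where
  "pmap x = (\<lambda>i. [p1 x, p2 x, p3 x, p4 x, p5 x] ! i)"

definition poly5 :: "((nat \<Rightarrow> complex) \<Rightarrow> complex) \<Rightarrow> bool" where
  "poly5 P = polyfn {(\<lambda>z. z i) | i. i < 5} P"

definition alg_indep_on_X2 :: bool where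
  "alg_indep_on_X2 \<longleftrightarrow> (\<forall>P. poly5 P \<longrightarrow> (\<forall>x\<in>X2. P (pmap x) = 0) \<longrightarrow> (\<forall>z. P z = 0))"

text \<open>Rational functions on X2: quotients f/g of polynomial functions with g not
  identically zero on X2; two are equal iff f1 g2 - f2 g1 vanishes on X2.\<close>
definition rat_fun :: "(L2 \<Rightarrow> complex) \<Rightarrow> (L2 \<Rightarrow> complex) \<Rightarrow> bool" where
  "rat_fun f g \<longleftrightarrow> L2_poly f \<and> L2_poly g \<and> \<not> (\<forall>x\<in>X2. g x = 0)"

definition rat_eq :: "(L2 \<Rightarrow> complex) \<Rightarrow> (L2 \<Rightarrow> complex) \<Rightarrow>
    (L2 \<Rightarrow> complex) \<Rightarrow> (L2 \<Rightarrow> complex) \<Rightarrow> bool" where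
  "rat_eq f1 g1 f2 g2 \<longleftrightarrow> (\<forall>x\<in>X2. f1 x * g2 x = f2 x * g1 x)"

definition G_invariant :: "(L2 \<Rightarrow> complex) \<Rightarrow> (L2 \<Rightarrow> complex) \<Rightarrow> bool" where
  "G_invariant f g \<longleftrightarrow> (\<forall>h\<in>Grp. rat_eq (f \<circ> act h) (g \<circ> act h) f g)"

definition in_Cp :: "(L2 \<Rightarrow> complex) \<Rightarrow> (L2 \<Rightarrow> complex) \<Rightarrow> bool" where
  "in_Cp f g \<longleftrightarrow> (\<exists>A B. poly5 A \<and> poly5 B \<and> \<not> (\<forall>x\<in>X2. B (pmap x) = 0) \<and>
       rat_eq f g (A \<circ> pmap) (B \<circ> pmap))"

end

theory Submission
  imports Defs "HOL-Computational_Algebra.Polynomial"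
begin

definition Cn :: "nat \<Rightarrow> ((nat \<Rightarrow> complex) \<Rightarrow> complex) set" where
  "Cn n = {(\<lambda>z. z i) | i. i < n}"

lemma Cn_coord: "i < n \<Longrightarrow> polyfn (Cn n) (\<lambda>z. z i)"
  by (rule polyfn.coord) (auto simp: Cn_def)

lemma polyfn_comp:
  assumes "polyfn Cs f" "\<And>c. c \<in> Cs \<Longrightarrow> polyfn Ds (\<lambda>x. c (\<phi> x))"
  shows "polyfn Ds (\<lambda>x. f (\<phi> x))"
  using assms(1)
proof induction
  case (const c) show ?case by (rule polyfn.const)
next
  case (coord f) then show ?case using assms(2) by blast
next
  case (add f g) from add.IH show ?case by (rule polyfn.add)
next
  case (mult f g) from mult.IH show ?case by (rule polyfn.mult)
qed

lemma polyfn_neg: "polyfn Cs f \<Longrightarrow> polyfn Cs (\<lambda>x. - f x)"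
proof -
  assume "polyfn Cs f"
  then have "polyfn Cs (\<lambda>x. (-1) * f x)" by (intro polyfn.mult polyfn.const)
  then show ?thesis by simp
qed

lemma polyfn_sub: "polyfn Cs f \<Longrightarrow> polyfn Cs g \<Longrightarrow> polyfn Cs (\<lambda>x. f x - g x)"
  using polyfn.add[OF _ polyfn_neg, of Cs f g] by simp

lemma polyfn_pow: "polyfn Cs f \<Longrightarrow> polyfn Cs (\<lambda>x. f x ^ n)"
  by (induction n) (auto intro: polyfn.const polyfn.mult)

lemma polyfn_sum: "finite A \<Longrightarrow> (\<And>a. a \<in> A \<Longrightarrow> polyfn Cs (f a)) \<Longrightarrow> polyfn Cs (\<lambda>x. \<Sum>a\<in>A. f a x)"
  by (induction A rule: finite_induct) (auto intro: polyfn.const polyfn.add)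

lemma polyfn_mono: "polyfn Cs f \<Longrightarrow> Cs \<subseteq> Ds \<Longrightarrow> polyfn Ds f"
  by (induction rule: polyfn.induct) (auto intro: polyfn.intros)

lemma polyfn_line:
  assumes "polyfn Cs f" "\<And>c. c \<in> Cs \<Longrightarrow> \<exists>a b. \<forall>t. c (l t) = a + b * t"
  shows "\<exists>p. \<forall>t. f (l t) = poly p t"
  using assms(1)
proof induction
  case (const c) show ?case by (rule exI[of _ "[:c:]"]) simp
next
  case (coord f)
  then obtain a b where "\<forall>t. f (l t) = a + b * t" using assms(2) by blast
  then show ?case by (intro exI[of _ "[:a, b:]"]) simp
next
  case (add f g)
  then obtain p q where "\<forall>t. f (l t) = poly p t" "\<forall>t. g (l t) = poly q t" by blast
  then show ?case by (intro exI[of _ "p + q"]) simp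
next
  case (mult f g)
  then obtain p q where "\<forall>t. f (l t) = poly p t" "\<forall>t. g (l t) = poly q t" by blast
  then show ?case by (intro exI[of _ "p * q"]) simp
qed

lemma polyfn_Cn_line:
  assumes "polyfn (Cn n) f"
  shows "\<exists>p. \<forall>t. f (\<lambda>i. z i + t * (y i - z i)) = poly p t"
proof (rule polyfn_line[OF assms])
  fix c assume "c \<in> Cn n"
  then obtain i where c: "c = (\<lambda>z. z i)" by (auto simp: Cn_def)
  show "\<exists>a b. \<forall>t. c (\<lambda>i. z i + t * (y i - z i)) = a + b * t"
    by (rule exI[of _ "z i"], rule exI[of _ "y i - z i"]) (simp add: c mult.commute)
qed

lemma polyfn_vanish:
  assumes P: "polyfn (Cn n) P" and D: "polyfn (Cn n) D" and y: "D y \<noteq> 0"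
    and van: "\<And>x. D x \<noteq> 0 \<Longrightarrow> P x = 0"
  shows "P z = 0"
proof -
  let ?l = "\<lambda>t. (\<lambda>i. z i + t * (y i - z i))"
  obtain p where p: "\<And>t. P (?l t) = poly p t" using polyfn_Cn_line[OF P] by blast
  obtain q where q: "\<And>t. D (?l t) = poly q t" using polyfn_Cn_line[OF D] by blast
  have "?l 1 = y" by auto
  then have "poly q 1 \<noteq> 0" using q[of 1] y by simp
  then have q0: "q \<noteq> 0" by auto
  have fin: "finite {t. poly q t = 0}" using poly_roots_finite[OF q0] .
  have "{t. poly q t \<noteq> 0} \<subseteq> {t. poly p t = 0}"
    using van p q by (auto, metis)
  moreover have "infinite {t::complex. poly q t \<noteq> 0}"
  proof
    assume "finite {t::complex. poly q t \<noteq> 0}"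
    with fin have "finite ({t. poly q t = 0} \<union> {t. poly q t \<noteq> 0})" by blast
    moreover have "{t::complex. poly q t = 0} \<union> {t. poly q t \<noteq> 0} = UNIV" by blast
    ultimately show False using infinite_UNIV_char_0 by auto
  qed
  ultimately have "infinite {t. poly p t = 0}" using finite_subset by blast
  then have "p = 0" using poly_roots_finite by blast
  then have "P (?l 0) = 0" using p[of 0] by simp
  moreover have "?l 0 = z" by auto
  ultimately show ?thesis by simp
qed

lemma polyfn_prod_zero:
  assumes P: "polyfn (Cn n) P" and D: "polyfn (Cn n) D" and y: "D y \<noteq> 0"
    and van: "\<And>x. D x * P x = 0"
  shows "P z = 0"
  using polyfn_vanish[OF P D y] van by (metis mult_eq_0_iff)

lemma polyfn_Cn_local:
  assumes "polyfn (Cn n) P" "\<And>i. i < n \<Longrightarrow> z i = z' i"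
  shows "P z = P z'"
  using assms(1) by induction (auto simp: Cn_def assms(2))

definition sqk :: "nat \<Rightarrow> (nat \<Rightarrow> complex) \<Rightarrow> (nat \<Rightarrow> complex)" where
  "sqk k w = w(k := (w k)^2)"

definition ngk :: "nat \<Rightarrow> (nat \<Rightarrow> complex) \<Rightarrow> (nat \<Rightarrow> complex)" where
  "ngk k w = w(k := - w k)"

lemma polyfn_decomp:
  assumes "polyfn (Cn n) P" "k < n"
  shows "\<exists>E Od. polyfn (Cn n) E \<and> polyfn (Cn n) Od \<and>
     (\<forall>w. P w = E (sqk k w) + w k * Od (sqk k w))"
  using assms(1)
proof induction
  case (const c)
  show ?case by (rule exI[of _ "\<lambda>_. c"], rule exI[of _ "\<lambda>_. 0"]) (auto intro: polyfn.const)
next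
  case (coord f)
  then obtain j where f: "f = (\<lambda>z. z j)" and j: "j < n" by (auto simp: Cn_def)
  show ?case
  proof (cases "j = k")
    case True
    show ?thesis by (rule exI[of _ "\<lambda>_. 0"], rule exI[of _ "\<lambda>_. 1"]) (auto intro: polyfn.const simp: f True)
  next
    case False
    show ?thesis by (rule exI[of _ "\<lambda>z. z j"], rule exI[of _ "\<lambda>_. 0"])
      (auto intro: polyfn.const Cn_coord j simp: f False sqk_def)
  qed
next
  case (add f g)
  then obtain E1 Od1 E2 Od2 where h: "polyfn (Cn n) E1" "polyfn (Cn n) Od1" "polyfn (Cn n) E2" "polyfn (Cn n) Od2"
    "\<forall>w. f w = E1 (sqk k w) + w k * Od1 (sqk k w)" "\<forall>w. g w = E2 (sqk k w) + w k * Od2 (sqk k w)" by blast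
  show ?case
    by (rule exI[of _ "\<lambda>z. E1 z + E2 z"], rule exI[of _ "\<lambda>z. Od1 z + Od2 z"])
      (auto intro: polyfn.add h simp: h(5,6) algebra_simps)
next
  case (mult f g)
  then obtain E1 Od1 E2 Od2 where h: "polyfn (Cn n) E1" "polyfn (Cn n) Od1" "polyfn (Cn n) E2" "polyfn (Cn n) Od2"
    "\<forall>w. f w = E1 (sqk k w) + w k * Od1 (sqk k w)" "\<forall>w. g w = E2 (sqk k w) + w k * Od2 (sqk k w)" by blast
  have "polyfn (Cn n) (\<lambda>z. E1 z * E2 z + z k * (Od1 z * Od2 z))"
    by (intro polyfn.add polyfn.mult h Cn_coord assms(2))
  moreover have "polyfn (Cn n) (\<lambda>z. E1 z * Od2 z + Od1 z * E2 z)"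
    by (intro polyfn.add polyfn.mult h)
  moreover have "\<forall>w. f w * g w = (E1 (sqk k w) * E2 (sqk k w) + (sqk k w) k * (Od1 (sqk k w) * Od2 (sqk k w)))
        + w k * (E1 (sqk k w) * Od2 (sqk k w) + Od1 (sqk k w) * E2 (sqk k w))"
    by (simp add: h(5,6) sqk_def algebra_simps power2_eq_square)
  ultimately show ?case by blast
qed

lemma sqk_ngk: "sqk k (ngk k w) = sqk k w"
  by (simp add: sqk_def ngk_def)

lemma polyfn_even:
  assumes "polyfn (Cn n) P" "k < n" "\<And>w. P (ngk k w) = P w"
  shows "\<exists>E. polyfn (Cn n) E \<and> (\<forall>w. P w = E (sqk k w))"
proof -
  obtain E Od where h: "polyfn (Cn n) E" "polyfn (Cn n) Od" "\<forall>w. P w = E (sqk k w) + w k * Od (sqk k w)"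
    using polyfn_decomp[OF assms(1,2)] by blast
  have "P w = E (sqk k w)" for w
  proof -
    have "P (ngk k w) = E (sqk k w) - w k * Od (sqk k w)"
      using h(3)[rule_format, of "ngk k w"] by (simp add: sqk_ngk) (simp add: ngk_def)
    then show ?thesis using assms(3)[of w] h(3)[rule_format, of w] by simp
  qed
  with h(1) show ?thesis by blast
qed

lemma ngk_ngk[simp]: "ngk k (ngk k w) = w"
  by (simp add: ngk_def)

lemma polyfn_ngk: "polyfn (Cn n) P \<Longrightarrow> polyfn (Cn n) (\<lambda>w. P (ngk k w))"
proof (erule polyfn_comp)
  fix c assume "c \<in> Cn n"
  then obtain i where c: "c = (\<lambda>z. z i)" "i < n" by (auto simp: Cn_def)
  show "polyfn (Cn n) (\<lambda>w. c (ngk k w))"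
  proof (cases "i = k")
    case True
    then show ?thesis using c by (simp add: ngk_def) (intro polyfn_neg Cn_coord)
  next
    case False
    then show ?thesis using c by (simp add: ngk_def Cn_coord)
  qed
qed

lemma polyfn_sqk: "polyfn (Cn n) P \<Longrightarrow> polyfn (Cn n) (\<lambda>w. P (sqk k w))"
proof (erule polyfn_comp)
  fix c assume "c \<in> Cn n"
  then obtain i where c: "c = (\<lambda>z. z i)" "i < n" by (auto simp: Cn_def)
  show "polyfn (Cn n) (\<lambda>w. c (sqk k w))"
  proof (cases "i = k")
    case True
    then show ?thesis using c by (simp add: sqk_def) (intro polyfn_pow Cn_coord)
  next
    case False
    then show ?thesis using c by (simp add: sqk_def Cn_coord)
  qed
qed

lemma prod_nonzero:
  assumes "polyfn (Cn n) P" "polyfn (Cn n) Q" "P a \<noteq> 0" "Q b \<noteq> 0"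
  shows "\<exists>x. P x * Q x \<noteq> 0"
proof (rule ccontr)
  assume "\<not> ?thesis"
  then have "\<And>x. P x * Q x = 0" by auto
  then have "Q b = 0" using polyfn_prod_zero[OF assms(2) assms(1) assms(3)] by blast
  with assms(4) show False by simp
qed

lemma descent_step:
  assumes P: "polyfn (Cn n) P" and Q: "polyfn (Cn n) Q" and k: "k < n" and y: "Q y \<noteq> 0"
    and inv: "\<And>w. P (ngk k w) * Q w = P w * Q (ngk k w)"
  shows "\<exists>P' Q'. polyfn (Cn n) P' \<and> polyfn (Cn n) Q' \<and> (\<exists>y. Q' y \<noteq> 0) \<and>
     (\<forall>w. P w * Q' (sqk k w) = P' (sqk k w) * Q w)"
proof -
  define N where "N w = P w * Q (ngk k w)" for w
  define D where "D w = Q w * Q (ngk k w)" for w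
  have pN: "polyfn (Cn n) N" unfolding N_def by (intro polyfn.mult P polyfn_ngk Q)
  have pD: "polyfn (Cn n) D" unfolding D_def by (intro polyfn.mult Q polyfn_ngk)
  have iN: "N (ngk k w) = N w" for w using inv[of w] by (simp add: N_def mult.commute)
  have iD: "D (ngk k w) = D w" for w by (simp add: D_def mult.commute)
  obtain P' where P': "polyfn (Cn n) P'" "\<forall>w. N w = P' (sqk k w)" using polyfn_even[OF pN k iN] by blast
  obtain Q' where Q': "polyfn (Cn n) Q'" "\<forall>w. D w = Q' (sqk k w)" using polyfn_even[OF pD k iD] by blast
  have "Q (ngk k (ngk k y)) \<noteq> 0" using y by simp
  then obtain x where "D x \<noteq> 0" using prod_nonzero[OF Q polyfn_ngk[OF Q] y] unfolding D_def by blast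
  then have "Q' (sqk k x) \<noteq> 0" using Q' by simp
  moreover have "P w * Q' (sqk k w) = P' (sqk k w) * Q w" for w
    using P'(2) Q'(2) by (metis D_def N_def mult.assoc mult.commute)
  ultimately show ?thesis using P'(1) Q'(1) by blast
qed

lemma sqk_surj: "sqk k (v(k := csqrt (v k))) = v"
  by (auto simp: sqk_def)

lemma sqk_ngk_comm: "j \<noteq> k \<Longrightarrow> sqk k (ngk j w) = ngk j (sqk k w)"
  by (auto simp: sqk_def ngk_def fun_upd_twist)

lemma descent_transfer:
  assumes P: "polyfn (Cn n) P" and Q: "polyfn (Cn n) Q" and P': "polyfn (Cn n) P'" and Q': "polyfn (Cn n) Q'"
    and y: "Q y \<noteq> 0" and jk: "j \<noteq> k" "j < n"
    and inv: "\<And>w. P (ngk j w) * Q w = P w * Q (ngk j w)"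
    and rel: "\<And>w. P w * Q' (sqk k w) = P' (sqk k w) * Q w"
  shows "P' (ngk j v) * Q' v = P' v * Q' (ngk j v)"
proof -
  define X where "X w = P' (ngk j (sqk k w)) * Q' (sqk k w) - P' (sqk k w) * Q' (ngk j (sqk k w))" for w
  have pX: "polyfn (Cn n) X" unfolding X_def
    by (intro polyfn_sub polyfn.mult polyfn_sqk polyfn_ngk P' Q')
  have pQQ: "polyfn (Cn n) (\<lambda>w. Q w * Q (ngk j w))" by (intro polyfn.mult Q polyfn_ngk)
  have "Q (ngk j (ngk j y)) \<noteq> 0" using y by simp
  then obtain x where x: "Q x * Q (ngk j x) \<noteq> 0" using prod_nonzero[OF Q polyfn_ngk[OF Q] y] by blast
  have "(Q w * Q (ngk j w)) * X w = 0" for w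
  proof -
    have r1: "P w * Q' (sqk k w) = P' (sqk k w) * Q w" by (rule rel)
    have r2: "P (ngk j w) * Q' (ngk j (sqk k w)) = P' (ngk j (sqk k w)) * Q (ngk j w)"
      using rel[of "ngk j w"] sqk_ngk_comm[OF jk(1)] by simp
    have "(Q w * Q (ngk j w)) * X w =
       (P' (ngk j (sqk k w)) * Q (ngk j w)) * Q' (sqk k w) * Q w - (P' (sqk k w) * Q w) * Q' (ngk j (sqk k w)) * Q (ngk j w)"
      by (simp add: X_def algebra_simps)
    also have "\<dots> = (P (ngk j w) * Q' (ngk j (sqk k w))) * Q' (sqk k w) * Q w - (P w * Q' (sqk k w)) * Q' (ngk j (sqk k w)) * Q (ngk j w)"
      by (simp add: r1 r2)
    also have "\<dots> = Q' (sqk k w) * Q' (ngk j (sqk k w)) * (P (ngk j w) * Q w - P w * Q (ngk j w))"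
      by (simp add: algebra_simps)
    also have "\<dots> = 0" using inv[of w] by simp
    finally show ?thesis .
  qed
  then have "X w = 0" for w using polyfn_prod_zero[OF pX pQQ x] by blast
  from this[of "v(k := csqrt (v k))"] show ?thesis by (simp add: X_def sqk_surj)
qed

lemma descent2:
  assumes P: "polyfn (Cn n) P" and Q: "polyfn (Cn n) Q" and y: "Q y \<noteq> 0"
    and k: "k < n" and j: "j < n" "j \<noteq> k"
    and invk: "\<And>w. P (ngk k w) * Q w = P w * Q (ngk k w)"
    and invj: "\<And>w. P (ngk j w) * Q w = P w * Q (ngk j w)"
  shows "\<exists>A B. polyfn (Cn n) A \<and> polyfn (Cn n) B \<and> (\<exists>z. B z \<noteq> 0) \<and>
     (\<forall>w. P w * B (sqk j (sqk k w)) = A (sqk j (sqk k w)) * Q w)"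
proof -
  obtain P' Q' y' where h1: "polyfn (Cn n) P'" "polyfn (Cn n) Q'" "Q' y' \<noteq> 0"
     "\<forall>w. P w * Q' (sqk k w) = P' (sqk k w) * Q w"
    using descent_step[OF P Q k y invk] by blast
  have invj': "P' (ngk j v) * Q' v = P' v * Q' (ngk j v)" for v
    by (rule descent_transfer[OF P Q h1(1,2) y j(2,1) invj h1(4)[rule_format]])
  obtain A B where h2: "polyfn (Cn n) A" "polyfn (Cn n) B" "\<exists>z. B z \<noteq> 0"
     "\<forall>v. P' v * B (sqk j v) = A (sqk j v) * Q' v"
    using descent_step[OF h1(1,2) j(1) h1(3) invj'] by blast
  have pQs: "polyfn (Cn n) (\<lambda>w. Q' (sqk k w))" by (rule polyfn_sqk[OF h1(2)])
  have nz: "Q' (sqk k (y'(k := csqrt (y' k)))) \<noteq> 0" using h1(3) by (simp add: sqk_surj)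
  have pX: "polyfn (Cn n) (\<lambda>w. P w * B (sqk j (sqk k w)) - A (sqk j (sqk k w)) * Q w)"
    by (intro polyfn_sub polyfn.mult P Q polyfn_sqk h2(1,2))
  have "Q' (sqk k w) * (P w * B (sqk j (sqk k w)) - A (sqk j (sqk k w)) * Q w) = 0" for w
  proof -
    have "Q' (sqk k w) * (P w * B (sqk j (sqk k w))) = (P' (sqk k w) * B (sqk j (sqk k w))) * Q w"
      using h1(4) by (metis mult.assoc mult.commute)
    also have "\<dots> = A (sqk j (sqk k w)) * Q' (sqk k w) * Q w" using h2(4) by simp
    finally show ?thesis by (simp add: algebra_simps)
  qed
  then have "P w * B (sqk j (sqk k w)) - A (sqk j (sqk k w)) * Q w = 0" for w
    using polyfn_prod_zero[OF pX pQs nz] by blast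
  then show ?thesis using h2(1,2,3) by (intro exI[of _ A] exI[of _ B]) auto
qed

lemma SO3_right: "g \<in> SO3 \<Longrightarrow> g ** transpose g = mat 1"
  unfolding SO3_def using matrix_left_right_inverse by blast

lemma SO3_left: "g \<in> SO3 \<Longrightarrow> transpose g ** g = mat 1"
  unfolding SO3_def by blast

lemma SO3_inv: "g \<in> SO3 \<Longrightarrow> matrix_inv g = transpose g"
proof -
  assume g: "g \<in> SO3"
  have ex: "\<exists>A'. g ** A' = mat 1 \<and> A' ** g = mat 1" using SO3_left[OF g] SO3_right[OF g] by blast
  then have h: "g ** matrix_inv g = mat 1" "matrix_inv g ** g = mat 1"
    unfolding matrix_inv_def by (metis (mono_tags, lifting) someI_ex)+
  have "matrix_inv g = (transpose g ** g) ** matrix_inv g" using SO3_left[OF g] by simp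
  also have "\<dots> = transpose g" using h(1) by (simp add: matrix_mul_assoc[symmetric])
  finally show ?thesis .
qed

lemma SO3_mult: "g \<in> SO3 \<Longrightarrow> h \<in> SO3 \<Longrightarrow> g ** h \<in> SO3"
proof -
  assume g: "g \<in> SO3" and h: "h \<in> SO3"
  have "transpose (g ** h) ** (g ** h) = transpose h ** (transpose g ** g) ** h"
    by (simp add: matrix_transpose_mul matrix_mul_assoc)
  also have "\<dots> = mat 1" using SO3_left[OF g] SO3_left[OF h] by simp
  finally show ?thesis using g h by (simp add: SO3_def det_mul)
qed

lemma SO3_transpose: "g \<in> SO3 \<Longrightarrow> transpose g \<in> SO3"
  using SO3_right[of g] by (simp add: SO3_def det_transpose)

lemma SO3_one: "mat 1 \<in> SO3"
  by (simp add: SO3_def det_I)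

definition gmult :: "(complex^3^3) \<times> (complex^3^3) \<Rightarrow> (complex^3^3) \<times> (complex^3^3) \<Rightarrow> (complex^3^3) \<times> (complex^3^3)" where
  "gmult h k = (fst h ** fst k, snd h ** snd k)"

definition ginv :: "(complex^3^3) \<times> (complex^3^3) \<Rightarrow> (complex^3^3) \<times> (complex^3^3)" where
  "ginv h = (transpose (fst h), transpose (snd h))"

lemma Grp_mult: "h \<in> Grp \<Longrightarrow> k \<in> Grp \<Longrightarrow> gmult h k \<in> Grp"
  by (auto simp: Grp_def gmult_def SO3_mult)

lemma Grp_inv: "h \<in> Grp \<Longrightarrow> ginv h \<in> Grp"
  by (auto simp: Grp_def ginv_def SO3_transpose)

lemma Grp_one: "(mat 1, mat 1) \<in> Grp"
  by (simp add: Grp_def SO3_one)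

lemma act_eq: "act (g1, g2) x = (g1 *v fst x, g2 *v fst (snd x), g2 ** snd (snd x) ** matrix_inv g1)"
  by (cases x) auto

lemma act_comp: "h \<in> Grp \<Longrightarrow> k \<in> Grp \<Longrightarrow> act h (act k x) = act (gmult h k) x"
proof -
  assume h: "h \<in> Grp" and k: "k \<in> Grp"
  obtain h1 h2 where hh: "h = (h1, h2)" by (cases h)
  obtain k1 k2 where kk: "k = (k1, k2)" by (cases k)
  have s: "h1 \<in> SO3" "h2 \<in> SO3" "k1 \<in> SO3" "k2 \<in> SO3" using h k hh kk by (auto simp: Grp_def)
  have s2: "h1 ** k1 \<in> SO3" using s by (simp add: SO3_mult)
  show ?thesis
    using s s2 by (simp add: hh kk act_eq gmult_def SO3_inv matrix_vector_mul_assoc matrix_transpose_mul matrix_mul_assoc)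
qed

lemma act_one: "act (mat 1, mat 1) x = x"
proof -
  have "matrix_inv (mat 1 :: complex^3^3) = mat 1" using SO3_inv[OF SO3_one] by simp
  then show ?thesis by (simp add: act_eq)
qed

lemma act_inv: "h \<in> Grp \<Longrightarrow> act (ginv h) (act h x) = x"
proof -
  assume h: "h \<in> Grp"
  have "gmult (ginv h) h = (mat 1, mat 1)"
    using h by (auto simp: gmult_def ginv_def Grp_def SO3_left)
  then show ?thesis using act_comp[OF Grp_inv[OF h] h] act_one by simp
qed

lemma act_inv2: "h \<in> Grp \<Longrightarrow> act h (act (ginv h) x) = x"
proof -
  assume h: "h \<in> Grp"
  have "gmult h (ginv h) = (mat 1, mat 1)"
    using h by (auto simp: gmult_def ginv_def Grp_def SO3_right)
  then show ?thesis using act_comp[OF h Grp_inv[OF h]] act_one by simp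
qed

lemma bil_mat: "bil (A *v x) y = bil x (transpose A *v y)"
  by (simp add: bil_def matrix_vector_mult_def transpose_def sum_3 algebra_simps)

lemma bil_SO3: "g \<in> SO3 \<Longrightarrow> bil (g *v x) (g *v y) = bil x y"
  by (simp add: bil_mat matrix_vector_mul_assoc SO3_left)

lemma trace_conj: "g \<in> SO3 \<Longrightarrow> trace (g ** M ** transpose g) = trace M"
  by (metis SO3_left matrix_mul_assoc matrix_mul_rid trace_mul_sym)

lemma p_inv:
  assumes h: "h \<in> Grp"
  shows "p1 (act h x) = p1 x" "p2 (act h x) = p2 x" "p3 (act h x) = p3 x"
        "p4 (act h x) = p4 x" "p5 (act h x) = p5 x"
proof -
  obtain g1 g2 where hh: "h = (g1, g2)" by (cases h)
  obtain v w C where xx: "x = (v, w, C)" by (cases x)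
  have s: "g1 \<in> SO3" "g2 \<in> SO3" using h hh by (auto simp: Grp_def)
  show "p1 (act h x) = p1 x" using s by (simp add: hh xx bil_SO3)
  show "p2 (act h x) = p2 x" using s by (simp add: hh xx bil_SO3)
  have "(g2 ** C ** transpose g1) *v (g1 *v v) = g2 *v (C *v v)"
    using s by (simp add: matrix_vector_mul_assoc matrix_mul_assoc[symmetric] SO3_left)
  then show "p3 (act h x) = p3 x" using s by (simp add: hh xx bil_SO3 SO3_inv)
  have "transpose (g2 ** C ** transpose g1) ** (g2 ** C ** transpose g1)
      = g1 ** (transpose C ** C) ** transpose g1"
  proof -
    have "transpose (g2 ** C ** transpose g1) ** (g2 ** C ** transpose g1)
       = g1 ** transpose C ** (transpose g2 ** g2) ** C ** transpose g1"
      by (simp add: matrix_transpose_mul matrix_mul_assoc)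
    then show ?thesis using s by (simp add: SO3_left matrix_mul_assoc)
  qed
  then show "p4 (act h x) = p4 x" using s by (simp add: hh xx SO3_inv trace_conj)
  show "p5 (act h x) = p5 x" using s by (simp add: hh xx SO3_inv det_mul det_transpose SO3_def)
qed

lemma pmap_inv: "h \<in> Grp \<Longrightarrow> pmap (act h x) = pmap x"
  by (simp add: pmap_def p_inv)

lemma L2c_v: "polyfn L2_coords (\<lambda>x::L2. fst x $ i)"
  by (rule polyfn.coord) (auto simp: L2_coords_def)
lemma L2c_w: "polyfn L2_coords (\<lambda>x::L2. fst (snd x) $ i)"
  by (rule polyfn.coord) (auto simp: L2_coords_def)
lemma L2c_C: "polyfn L2_coords (\<lambda>x::L2. snd (snd x) $ b $ a)"
  by (rule polyfn.coord) (auto simp: L2_coords_def)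

lemma L2_coords_cases:
  assumes "c \<in> L2_coords"
  obtains i where "c = (\<lambda>x. fst x $ i)" | i where "c = (\<lambda>x. fst (snd x) $ i)"
    | a b where "c = (\<lambda>x. snd (snd x) $ b $ a)"
  using assms unfolding L2_coords_def by blast

lemma L2_poly_comp:
  assumes "L2_poly f" and "\<And>i. polyfn Ds (\<lambda>x. fst (\<phi> x) $ i)" "\<And>i. polyfn Ds (\<lambda>x. fst (snd (\<phi> x)) $ i)"
    "\<And>a b. polyfn Ds (\<lambda>x. snd (snd (\<phi> x)) $ b $ a)"
  shows "polyfn Ds (\<lambda>x. f (\<phi> x))"
  using assms(1) unfolding L2_poly_def
  by (rule polyfn_comp) (erule L2_coords_cases; simp add: assms(2-4))

lemma polyfn_mv: "(\<And>j. polyfn Cs (\<lambda>x. V x $ j)) \<Longrightarrow> polyfn Cs (\<lambda>x. (M *v V x) $ i)"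
  unfolding matrix_vector_mult_def
  by (simp, intro polyfn_sum polyfn.mult polyfn.const) auto

lemma polyfn_mmC: "(\<And>a b. polyfn Cs (\<lambda>x. C x $ b $ a)) \<Longrightarrow> polyfn Cs (\<lambda>x. (A ** C x ** B) $ b $ a)"
  unfolding matrix_matrix_mult_def
  by (simp, intro polyfn_sum polyfn.mult polyfn.const) auto

lemma L2_poly_act: "L2_poly f \<Longrightarrow> L2_poly (\<lambda>x. f (act h x))"
proof -
  assume f: "L2_poly f"
  obtain g1 g2 where hh: "h = (g1, g2)" by (cases h)
  show ?thesis unfolding L2_poly_def[of "\<lambda>x. f (act h x)"]
    by (rule L2_poly_comp[OF f]) (simp_all add: hh act_eq polyfn_mv polyfn_mmC L2c_v L2c_w L2c_C)
qed

lemma p_fun: "p1 x = bil (fst x) (fst x)" "p2 x = bil (fst (snd x)) (fst (snd x))"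
  "p3 x = bil (snd (snd x) *v fst x) (fst (snd x))" "p4 x = trace (transpose (snd (snd x)) ** snd (snd x))"
  "p5 x = det (snd (snd x))"
  by (cases x; simp)+

lemma polyfn_bil: "(\<And>j. polyfn Cs (\<lambda>x. V x $ j)) \<Longrightarrow> (\<And>j. polyfn Cs (\<lambda>x. W x $ j)) \<Longrightarrow> polyfn Cs (\<lambda>x. bil (V x) (W x))"
  unfolding bil_def by (intro polyfn_sum polyfn.mult) auto

lemma L2_poly_p: "L2_poly p1" "L2_poly p2" "L2_poly p3" "L2_poly p4" "L2_poly p5"
proof -
  show "L2_poly p1" unfolding L2_poly_def p_fun by (intro polyfn_bil L2c_v)
  show "L2_poly p2" unfolding L2_poly_def p_fun by (intro polyfn_bil L2c_w)
  have mv: "polyfn L2_coords (\<lambda>x. (snd (snd x) *v fst x) $ j)" for j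
    unfolding matrix_vector_mult_def by (simp, intro polyfn_sum polyfn.mult L2c_C L2c_v) auto
  show "L2_poly p3" unfolding L2_poly_def p_fun by (intro polyfn_bil L2c_w mv)
  show "L2_poly p4" unfolding L2_poly_def p_fun trace_def matrix_matrix_mult_def transpose_def
    by (simp, intro polyfn_sum polyfn.mult L2c_C) auto
  show "L2_poly p5" unfolding L2_poly_def p_fun det_3
    by (intro polyfn_sub polyfn.add polyfn.mult L2c_C)
qed

lemma pmap_lt5: "i < 5 \<Longrightarrow> pmap x i = [p1 x, p2 x, p3 x, p4 x, p5 x] ! i"
  by (simp add: pmap_def)

lemma L2_poly_pmap: "poly5 P \<Longrightarrow> L2_poly (\<lambda>x. P (pmap x))"
  unfolding poly5_def L2_poly_def
proof (erule polyfn_comp)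
  fix c :: "(nat \<Rightarrow> complex) \<Rightarrow> complex" assume "c \<in> {\<lambda>z. z i |i. i < 5}"
  then obtain i where c: "c = (\<lambda>z. z i)" "i < 5" by blast
  then have "i = 0 \<or> i = 1 \<or> i = 2 \<or> i = 3 \<or> i = 4" by auto
  then show "polyfn L2_coords (\<lambda>x. c (pmap x))"
    using L2_poly_p unfolding L2_poly_def by (auto simp: c pmap_def)
qed

lemma poly5_Cn: "poly5 P = polyfn (Cn 5) P"
  by (simp add: poly5_def Cn_def)

lemma L2_poly_sub: "L2_poly f \<Longrightarrow> L2_poly g \<Longrightarrow> L2_poly (\<lambda>x. f x - g x)"
  unfolding L2_poly_def by (rule polyfn_sub)
lemma L2_poly_mult: "L2_poly f \<Longrightarrow> L2_poly g \<Longrightarrow> L2_poly (\<lambda>x. f x * g x)"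
  unfolding L2_poly_def by (rule polyfn.mult)

definition y7 :: "(nat \<Rightarrow> complex) \<Rightarrow> L2" where
  "y7 u = (vector [0, 0, u 0], vector [0, 0, u 1],
     vector [vector [u 3, u 4, 0], vector [u 5, u 6, 0], vector [0, 0, u 2]])"

lemma y7_X0: "y7 u \<in> X0"
  unfolding y7_def X0_def
  by (auto simp: forall_3)

lemma X0_y7: "x \<in> X0 \<Longrightarrow> \<exists>u. x = y7 u"
proof -
  assume x: "x \<in> X0"
  obtain v w C where xx: "x = (v, w, C)" by (cases x)
  define u where "u = (\<lambda>i::nat. if i = 0 then v$3 else if i = 1 then w$3 else if i = 2 then C$3$3
     else if i = 3 then C$1$1 else if i = 4 then C$1$2 else if i = 5 then C$2$1 else C$2$2)"
  have h: "v$1 = 0" "v$2 = 0" "w$1 = 0" "w$2 = 0" "\<And>a b. (a = 3) \<noteq> (b = 3) \<Longrightarrow> C$b$a = 0"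
    using x by (auto simp: X0_def xx)
  have "x = y7 u"
    unfolding xx y7_def u_def using h
    by (simp add: vec_eq_iff forall_3)
  then show ?thesis by blast
qed

lemma polyfn_y7: "L2_poly f \<Longrightarrow> polyfn (Cn 7) (\<lambda>u. f (y7 u))"
proof (erule L2_poly_comp)
  have c: "\<And>i. i < 7 \<Longrightarrow> polyfn (Cn 7) (\<lambda>u. u i)" by (rule Cn_coord)
  have z: "polyfn (Cn 7) (\<lambda>u. 0)" by (rule polyfn.const)
  fix i a b :: 3
  show "polyfn (Cn 7) (\<lambda>x. fst (y7 x) $ i)"
    using exhaust_3[of i] by (auto simp: y7_def c z)
  show "polyfn (Cn 7) (\<lambda>x. fst (snd (y7 x)) $ i)"
    using exhaust_3[of i] by (auto simp: y7_def c z)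
  show "polyfn (Cn 7) (\<lambda>x. snd (snd (y7 x)) $ b $ a)"
    using exhaust_3[of a] exhaust_3[of b] by (auto simp: y7_def c z)
qed

definition Rot2 :: "complex \<Rightarrow> complex \<Rightarrow> complex^3^3" where
  "Rot2 e f = vector [vector [(e+f)/2, \<i>*(e-f)/2, 0], vector [-\<i>*(e-f)/2, (e+f)/2, 0], vector [0, 0, 1]]"

lemma ii: "\<i> * \<i> = -1" by simp

lemma Rot2_SO3: assumes "e * f = 1" shows "Rot2 e f \<in> SO3"
proof -
  have "transpose (Rot2 e f) ** Rot2 e f = mat 1"
    unfolding Rot2_def
    by (simp add: vec_eq_iff forall_3 matrix_matrix_mult_def transpose_def sum_3 mat_def)
       (use assms ii in algebra)+
  moreover have "det (Rot2 e f) = 1"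
    unfolding Rot2_def det_3 by simp (use assms ii in algebra)
  ultimately show ?thesis by (simp add: SO3_def)
qed

definition nf7 :: "(nat \<Rightarrow> complex) \<Rightarrow> (nat \<Rightarrow> complex)" where
  "nf7 u = (let T = (u 3)^2 + (u 4)^2 + (u 5)^2 + (u 6)^2; D = u 3 * u 6 - u 4 * u 5 in
     (\<lambda>i. [u 0, u 1, u 2, (T+1)/2, -\<i>*D, \<i>*(T-1)/2, D] ! i))"

lemma act_Rot2_y7:
  fixes e1 f1 e2 f2 :: complex
  assumes "e1 * f1 = 1" "e2 * f2 = 1" "e1 * e2 * ((u 3 - u 6) + \<i>*(u 4 + u 5)) = 1"
    "e2 * f1 * ((u 3 + u 6) + \<i>*(u 5 - u 4)) = 1" "e1 * f2 = (u 3 + u 6) + \<i>*(u 5 - u 4)"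
    "f1 * f2 = (u 3 - u 6) + \<i>*(u 4 + u 5)"
  shows "act (Rot2 e1 f1, Rot2 e2 f2) (y7 u) = y7 (nf7 u)"
  unfolding act_eq SO3_inv[OF Rot2_SO3[OF assms(1)]]
  unfolding y7_def nf7_def Let_def Rot2_def
  apply (simp add: vec_eq_iff forall_3 matrix_matrix_mult_def matrix_vector_mult_def transpose_def sum_3)
  apply (intro conjI; simp add: field_simps)
  by (use assms ii in algebra)+

lemma O1:
  assumes P: "(u 3 + u 6) + \<i>*(u 5 - u 4) \<noteq> 0" and Q: "(u 3 - u 6) + \<i>*(u 4 + u 5) \<noteq> 0"
  shows "\<exists>h\<in>Grp. act h (y7 u) = y7 (nf7 u)"
proof -
  define p where "p = (u 3 + u 6) + \<i>*(u 5 - u 4)"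
  define q where "q = (u 3 - u 6) + \<i>*(u 4 + u 5)"
  define r where "r = csqrt (p * q)"
  have r2: "r * r = p * q" unfolding r_def by (metis power2_csqrt power2_eq_square)
  have p0: "p \<noteq> 0" and q0: "q \<noteq> 0" using P Q by (auto simp: p_def q_def)
  then have r0: "r \<noteq> 0" using r2 by auto
  obtain e1 f1 e2 f2 where e: "e1 = p / r" "f1 = r / p" "e2 = 1 / r" "f2 = r" by blast
  have h1: "e1 * f1 = 1" "e2 * f2 = 1" using p0 r0 by (simp_all add: e)
  have h2: "e1 * e2 * q = 1" using p0 q0 r0 r2 by (simp add: e field_simps)
  have h3: "e2 * f1 * p = 1" "e1 * f2 = p" using p0 r0 by (simp_all add: e)
  have h4: "f1 * f2 = q" using p0 r0 r2 by (simp add: e field_simps)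
  have "act (Rot2 e1 f1, Rot2 e2 f2) (y7 u) = y7 (nf7 u)"
    by (rule act_Rot2_y7) (use h1 h2 h3 h4 in \<open>simp_all add: p_def q_def\<close>)
  moreover have "(Rot2 e1 f1, Rot2 e2 f2) \<in> Grp" using h1 by (simp add: Grp_def Rot2_SO3)
  ultimately show ?thesis by blast
qed

definition Dn :: "(nat \<Rightarrow> complex) \<Rightarrow> complex" where
  "Dn w = w 0 * w 1 * w 2"

definition yw :: "(nat \<Rightarrow> complex) \<Rightarrow> (nat \<Rightarrow> complex)" where
  "yw w = (let g = w 2 / (w 0 * w 1); T = w 3 - g^2; D = w 4 / g in
     (\<lambda>i. [w 0, w 1, g, (T+1)/2, -\<i>*D, \<i>*(T-1)/2, D] ! i))"

definition Ys :: "(nat \<Rightarrow> complex) \<Rightarrow> L2" where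
  "Ys w = y7 (yw w)"

definition wof :: "(nat \<Rightarrow> complex) \<Rightarrow> (nat \<Rightarrow> complex)" where
  "wof u = (\<lambda>i. [u 0, u 1, u 2 * u 0 * u 1, (u 2)^2 + (u 3)^2 + (u 4)^2 + (u 5)^2 + (u 6)^2,
      u 2 * (u 3 * u 6 - u 4 * u 5)] ! i)"

lemma y7_cong: "(\<And>i. i < 7 \<Longrightarrow> u i = u' i) \<Longrightarrow> y7 u = y7 u'"
  unfolding y7_def by simp

lemma Ys_cong: "(\<And>i. i < 5 \<Longrightarrow> w i = w' i) \<Longrightarrow> Ys w = Ys w'"
  unfolding Ys_def yw_def Let_def by (rule y7_cong) simp

lemma nf7_wof: assumes "u 0 * u 1 * u 2 \<noteq> 0" shows "nf7 u = yw (wof u)"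
proof -
  have nz: "u 0 \<noteq> 0" "u 1 \<noteq> 0" "u 2 \<noteq> 0" using assms by auto
  have e1: "u 2 * u 0 * u 1 / (u 0 * u 1) = u 2" using nz by simp
  have e2: "(u 2)^2 + (u 3)^2 + (u 4)^2 + (u 5)^2 + (u 6)^2 - (u 2)^2 = (u 3)^2 + (u 4)^2 + (u 5)^2 + (u 6)^2" by simp
  have e3: "u 2 * (u 3 * u 6 - u 4 * u 5) / u 2 = u 3 * u 6 - u 4 * u 5" using nz by simp
  have nz': "u (Suc 0) \<noteq> 0" using nz by simp
  show ?thesis unfolding nf7_def yw_def wof_def Let_def
    apply (rule arg_cong[where f = nth])
    using nz nz' by (simp add: field_simps)
qed

lemma O1':
  assumes "u 0 * u 1 * u 2 \<noteq> 0" "(u 3 + u 6) + \<i>*(u 5 - u 4) \<noteq> 0" "(u 3 - u 6) + \<i>*(u 4 + u 5) \<noteq> 0"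
  shows "\<exists>h\<in>Grp. act h (y7 u) = Ys (wof u)"
  using O1[OF assms(2,3)] nf7_wof[OF assms(1)] by (simp add: Ys_def)

lemma Dn_wof: "u 0 * u 1 * u 2 \<noteq> 0 \<Longrightarrow> Dn (wof u) \<noteq> 0"
  by (simp add: Dn_def wof_def)

definition Sg :: "complex^3^3" where
  "Sg = vector [vector [1, 0, 0], vector [0, -1, 0], vector [0, 0, -1]]"

lemma Sg_SO3: "Sg \<in> SO3"
  unfolding SO3_def Sg_def det_3
  by (simp add: vec_eq_iff forall_3 matrix_matrix_mult_def transpose_def sum_3 mat_def)

lemma sigma1:
  assumes "Dn w \<noteq> 0"
  shows "act (Sg, mat 1) (Ys w) = Ys (ngk 0 w)"
proof -
  have "w 0 \<noteq> 0" "w 1 \<noteq> 0" "w 2 \<noteq> 0" using assms by (auto simp: Dn_def)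
  then show ?thesis
    unfolding act_eq SO3_inv[OF Sg_SO3]
    unfolding Ys_def y7_def yw_def Let_def Sg_def ngk_def
    by (simp add: vec_eq_iff forall_3 matrix_matrix_mult_def matrix_vector_mult_def transpose_def sum_3 mat_def)
qed

definition G2 :: "(nat \<Rightarrow> complex) \<Rightarrow> complex" where
  "G2 w = (w 3 * (w 0 * w 1)^2 - (w 2)^2)^2 * (w 2)^2 - 4 * (w 4)^2 * (w 0 * w 1)^6"

lemma sigma2:
  assumes "Dn w \<noteq> 0" "G2 w \<noteq> 0"
  shows "\<exists>h\<in>Grp. act h (Ys w) = Ys (ngk 1 w)"
proof -
  have nz: "w 0 \<noteq> 0" "w 1 \<noteq> 0" "w 2 \<noteq> 0" using assms by (auto simp: Dn_def)
  define g where "g = w 2 / (w 0 * w 1)"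
  define T where "T = w 3 - g^2"
  define D where "D = w 4 / g"
  have g0: "g \<noteq> 0" using nz by (simp add: g_def)
  define u' where "u' = (\<lambda>i. [w 0, - w 1, - g, (T+1)/2, -\<i>*D, -(\<i>*(T-1)/2), -D] ! i)"
  have a1: "act (mat 1, Sg) (Ys w) = y7 u'"
    unfolding act_eq SO3_inv[OF SO3_one] transpose_mat matrix_mul_rid
    unfolding Ys_def y7_def yw_def Let_def Sg_def u'_def g_def[symmetric] T_def[symmetric] D_def[symmetric]
    by (simp add: vec_eq_iff forall_3 matrix_matrix_mult_def matrix_vector_mult_def sum_3 mat_def)
  have key: "(T - 2*D) * (T + 2*D) \<noteq> 0"
  proof
    assume "(T - 2*D) * (T + 2*D) = 0"
    then have "T*T = 4*D*D" by (simp add: algebra_simps)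
    moreover have "G2 w = (T*T - 4*D*D) * ((w 0 * w 1)^4 * (w 2)^2)" using nz unfolding G2_def T_def D_def g_def
      by (simp add: field_simps) algebra
    ultimately have "G2 w = 0" by simp
    with assms(2) show False by simp
  qed
  have c1: "u' 0 * u' 1 * u' 2 \<noteq> 0" using nz g0 by (simp add: u'_def)
  have c2: "(u' 3 + u' 6) + \<i>*(u' 5 - u' 4) \<noteq> 0"
  proof -
    have "(u' 3 + u' 6) + \<i>*(u' 5 - u' 4) = T - 2*D" by (simp add: u'_def field_simps)
    then show ?thesis using key by simp
  qed
  have c3: "(u' 3 - u' 6) + \<i>*(u' 4 + u' 5) \<noteq> 0"
  proof -
    have "(u' 3 - u' 6) + \<i>*(u' 4 + u' 5) = T + 2*D" by (simp add: u'_def field_simps)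
    then show ?thesis using key by simp
  qed
  obtain h where h: "h \<in> Grp" "act h (y7 u') = Ys (wof u')" using O1'[OF c1 c2 c3] by blast
  have "Ys (wof u') = Ys (ngk 1 w)"
  proof (rule Ys_cong)
    fix i :: nat assume "i < 5"
    then have "i = 0 \<or> i = 1 \<or> i = 2 \<or> i = 3 \<or> i = 4" by auto
    have uv: "u' 0 = w 0" "u' 1 = - w 1" "u' 2 = - g" "u' 3 = (T+1)/2" "u' 4 = -\<i>*D"
      "u' 5 = -(\<i>*(T-1)/2)" "u' 6 = -D" by (simp_all add: u'_def)
    have w3: "w 3 = T + g^2" by (simp add: T_def)
    have w2: "w 2 = g * w 0 * w 1" using nz by (simp add: g_def)
    have w4: "w 4 = g * D" using g0 by (simp add: D_def)
    have "wof u' = (\<lambda>i. [w 0, - w 1, w 2, w 3, w 4] ! i)"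
    proof -
      have e3: "(- g)^2 + ((T+1)/2)^2 + (-\<i>*D)^2 + (-(\<i>*(T-1)/2))^2 + (-D)^2 = T + g^2"
        by (simp add: power2_eq_square field_simps)
      have e4: "(- g) * ((T+1)/2 * (-D) - (-\<i>*D) * (-(\<i>*(T-1)/2))) = g * D"
        by (simp add: field_simps)
      show ?thesis unfolding wof_def uv w3 w4 e3 e4 by (simp add: w2)
    qed
    then show "wof u' i = ngk 1 w i"
      using \<open>i = 0 \<or> i = 1 \<or> i = 2 \<or> i = 3 \<or> i = 4\<close> by (auto simp: ngk_def)
  qed
  moreover have "gmult h (mat 1, Sg) \<in> Grp" by (intro Grp_mult h(1)) (simp add: Grp_def SO3_one Sg_SO3)
  moreover have "act (gmult h (mat 1, Sg)) (Ys w) = act h (act (mat 1, Sg) (Ys w))"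
    by (rule act_comp[symmetric, OF h(1)]) (simp add: Grp_def SO3_one Sg_SO3)
  ultimately show ?thesis using a1 h(2) by metis
qed

lemma polyfn_rat_comp:
  assumes f: "polyfn Cs f" and D: "polyfn Ds Dd"
    and c: "\<And>c. c \<in> Cs \<Longrightarrow> \<exists>Pc. polyfn Ds Pc \<and> (\<forall>w. Dd w \<noteq> 0 \<longrightarrow> c (\<phi> w) * Dd w = Pc w)"
  shows "\<exists>N F. polyfn Ds F \<and> (\<forall>w. Dd w \<noteq> 0 \<longrightarrow> f (\<phi> w) * Dd w ^ N = F w)"
  using f
proof induction
  case (const a)
  show ?case by (rule exI[of _ 0], rule exI[of _ "\<lambda>_. a"]) (simp add: polyfn.const)
next
  case (coord g)
  then obtain Pc where "polyfn Ds Pc" "\<forall>w. Dd w \<noteq> 0 \<longrightarrow> g (\<phi> w) * Dd w = Pc w" using c by blast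
  then show ?case by (intro exI[of _ 1] exI[of _ Pc]) simp
next
  case (add f g)
  then obtain N1 F1 N2 F2 where h: "polyfn Ds F1" "\<forall>w. Dd w \<noteq> 0 \<longrightarrow> f (\<phi> w) * Dd w ^ N1 = F1 w"
    "polyfn Ds F2" "\<forall>w. Dd w \<noteq> 0 \<longrightarrow> g (\<phi> w) * Dd w ^ N2 = F2 w" by blast
  have "polyfn Ds (\<lambda>w. F1 w * Dd w ^ N2 + F2 w * Dd w ^ N1)"
    by (intro polyfn.add polyfn.mult polyfn_pow h D)
  moreover have "\<forall>w. Dd w \<noteq> 0 \<longrightarrow> (f (\<phi> w) + g (\<phi> w)) * Dd w ^ (N1 + N2) = F1 w * Dd w ^ N2 + F2 w * Dd w ^ N1"
    using h(2,4) by (auto simp: power_add algebra_simps)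
  ultimately show ?case by blast
next
  case (mult f g)
  then obtain N1 F1 N2 F2 where h: "polyfn Ds F1" "\<forall>w. Dd w \<noteq> 0 \<longrightarrow> f (\<phi> w) * Dd w ^ N1 = F1 w"
    "polyfn Ds F2" "\<forall>w. Dd w \<noteq> 0 \<longrightarrow> g (\<phi> w) * Dd w ^ N2 = F2 w" by blast
  have "polyfn Ds (\<lambda>w. F1 w * F2 w)" by (intro polyfn.mult h)
  moreover have "\<forall>w. Dd w \<noteq> 0 \<longrightarrow> (f (\<phi> w) * g (\<phi> w)) * Dd w ^ (N1 + N2) = F1 w * F2 w"
    using h(2,4) by (auto simp: power_add algebra_simps)
  ultimately show ?case by blast
qed

lemma Cn5: "polyfn (Cn 5) (\<lambda>w. w 0)" "polyfn (Cn 5) (\<lambda>w. w 1)" "polyfn (Cn 5) (\<lambda>w. w 2)"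
  "polyfn (Cn 5) (\<lambda>w. w 3)" "polyfn (Cn 5) (\<lambda>w. w 4)"
  by (auto intro: Cn_coord)

lemma polyfn_Dn: "polyfn (Cn 5) Dn"
  unfolding Dn_def by (intro polyfn.mult Cn5)

lemma polyfn_Dn2: "polyfn (Cn 5) (\<lambda>w. (Dn w)^2)"
  by (intro polyfn_pow polyfn_Dn)

lemma polyfn_Ys:
  assumes "L2_poly f"
  shows "\<exists>N F. polyfn (Cn 5) F \<and> (\<forall>w. Dn w \<noteq> 0 \<longrightarrow> f (Ys w) * ((Dn w)^2) ^ N = F w)"
proof -
  have f7: "polyfn (Cn 7) (\<lambda>u. f (y7 u))" by (rule polyfn_y7[OF assms])
  have "\<exists>N F. polyfn (Cn 5) F \<and> (\<forall>w. (Dn w)^2 \<noteq> 0 \<longrightarrow> f (y7 (yw w)) * ((Dn w)^2) ^ N = F w)"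
  proof (rule polyfn_rat_comp[OF f7 polyfn_Dn2])
    fix c assume "c \<in> Cn 7"
    then obtain i where ci: "c = (\<lambda>u. u i)" "i < 7" by (auto simp: Cn_def)
    let ?D = "\<lambda>w. (w 0 * w 1 * w 2)^2"
    let ?Pc = "\<lambda>w. [w 0 * ?D w, w 1 * ?D w, (w 2)^3 * w 0 * w 1,
       (w 3 * ?D w - (w 2)^4 + ?D w)/2, -\<i> * (w 4 * (w 0)^3 * (w 1)^3 * w 2),
       \<i> * (w 3 * ?D w - (w 2)^4 - ?D w)/2, w 4 * (w 0)^3 * (w 1)^3 * w 2] ! i"
    have "polyfn (Cn 5) ?Pc"
    proof -
      have "i = 0 \<or> i = 1 \<or> i = 2 \<or> i = 3 \<or> i = 4 \<or> i = 5 \<or> i = 6" using ci(2) by auto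
      then show ?thesis
      proof (elim disjE)
        assume "i = 3"
        have "polyfn (Cn 5) (\<lambda>w. (1/2) * ((w 3 * ?D w - (w 2)^4) + ?D w))"
          by (intro polyfn.mult polyfn.const polyfn.add polyfn_sub polyfn_pow Cn5)
        then show ?thesis using \<open>i = 3\<close> by (simp add: field_simps)
      next
        assume "i = 5"
        have "polyfn (Cn 5) (\<lambda>w. (\<i>/2) * ((w 3 * ?D w - (w 2)^4) - ?D w))"
          by (intro polyfn.mult polyfn.const polyfn.add polyfn_sub polyfn_pow Cn5)
        then show ?thesis using \<open>i = 5\<close> by (simp add: field_simps)
      qed (auto intro!: polyfn.mult polyfn.const polyfn.add polyfn_sub polyfn_pow polyfn_neg Cn_coord)
    qed
    moreover have "\<forall>w. (Dn w)^2 \<noteq> 0 \<longrightarrow> c (yw w) * (Dn w)^2 = ?Pc w"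
    proof (intro allI impI)
      fix w assume "(Dn w)^2 \<noteq> 0"
      then have nz: "w 0 \<noteq> 0" "w 1 \<noteq> 0" "w 2 \<noteq> 0" by (auto simp: Dn_def)
      have "i = 0 \<or> i = 1 \<or> i = 2 \<or> i = 3 \<or> i = 4 \<or> i = 5 \<or> i = 6" using ci(2) by auto
      then show "c (yw w) * (Dn w)^2 = ?Pc w"
        using nz unfolding ci(1) yw_def Let_def Dn_def
        by (elim disjE) (simp_all add: field_simps power2_eq_square power3_eq_cube power4_eq_xxxx)
    qed
    ultimately show "\<exists>Pc. polyfn (Cn 5) Pc \<and> (\<forall>w. (Dn w)^2 \<noteq> 0 \<longrightarrow> c (yw w) * (Dn w)^2 = Pc w)"
      by blast
  qed
  then show ?thesis by (simp add: Ys_def)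
qed

definition pof :: "(nat \<Rightarrow> complex) \<Rightarrow> (nat \<Rightarrow> complex)" where
  "pof u = (\<lambda>i. [(u 0)^2, (u 1)^2, u 2 * u 0 * u 1, (u 2)^2 + (u 3)^2 + (u 4)^2 + (u 5)^2 + (u 6)^2,
      u 2 * (u 3 * u 6 - u 4 * u 5)] ! i)"

lemma pmap_y7: "i < 5 \<Longrightarrow> pmap (y7 u) i = pof u i"
proof -
  assume "i < 5"
  then have "i = 0 \<or> i = 1 \<or> i = 2 \<or> i = 3 \<or> i = 4" by auto
  then show ?thesis
    unfolding pmap_def pof_def y7_def
    by (elim disjE) (simp_all add: bil_def sum_3 matrix_vector_mult_def trace_def transpose_def
        matrix_matrix_mult_def det_3 power2_eq_square algebra_simps)
qed

definition S2 :: "(nat \<Rightarrow> complex) \<Rightarrow> (nat \<Rightarrow> complex)" where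
  "S2 w = sqk 1 (sqk 0 w)"

lemma pmap_Ys: assumes "Dn w \<noteq> 0" "i < 5" shows "pmap (Ys w) i = S2 w i"
proof -
  have nz: "w 0 \<noteq> 0" "w 1 \<noteq> 0" "w 2 \<noteq> 0" using assms by (auto simp: Dn_def)
  have "i = 0 \<or> i = 1 \<or> i = 2 \<or> i = 3 \<or> i = 4" using assms by auto
  moreover have "pof (yw w) i = S2 w i"
  proof -
    define g where "g = w 2 / (w 0 * w 1)"
    define T where "T = w 3 - g^2"
    define D where "D = w 4 / g"
    have g0: "g \<noteq> 0" using nz by (simp add: g_def)
    have yv: "yw w 0 = w 0" "yw w 1 = w 1" "yw w 2 = g" "yw w 3 = (T+1)/2" "yw w 4 = -\<i>*D"
      "yw w 5 = \<i>*(T-1)/2" "yw w 6 = D" by (simp_all add: yw_def Let_def g_def T_def D_def)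
    have e2: "g * w 0 * w 1 = w 2" using nz by (simp add: g_def)
    have e3: "g^2 + ((T+1)/2)^2 + (-\<i>*D)^2 + (\<i>*(T-1)/2)^2 + D^2 = w 3"
      by (simp add: T_def power2_eq_square field_simps)
    have e4: "g * ((T+1)/2 * D - (-\<i>*D) * (\<i>*(T-1)/2)) = w 4"
      using g0 by (simp add: D_def field_simps)
    show ?thesis using \<open>i = 0 \<or> i = 1 \<or> i = 2 \<or> i = 3 \<or> i = 4\<close>
      unfolding pof_def yv e2 e3 e4 by (auto simp: S2_def sqk_def)
  qed
  ultimately show ?thesis using pmap_y7[OF assms(2)] by (simp add: Ys_def)
qed

definition Dgen :: "(nat \<Rightarrow> complex) \<Rightarrow> complex" where
  "Dgen u = u 0 * u 1 * u 2 * ((u 3 + u 6) + \<i>*(u 5 - u 4)) * ((u 3 - u 6) + \<i>*(u 4 + u 5))"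

lemma polyfn_Dgen: "polyfn (Cn 7) Dgen"
  unfolding Dgen_def by (intro polyfn.mult polyfn.add polyfn_sub polyfn.const Cn_coord; simp)

lemma Dgen_nz: "\<exists>u. Dgen u \<noteq> 0"
  by (rule exI[of _ "\<lambda>i. if i = 6 then 0 else if i = 5 then 0 else if i = 4 then 0 else 1"]) (simp add: Dgen_def)

lemma Dgen_O: assumes "Dgen u \<noteq> 0" shows "\<exists>h\<in>Grp. act h (y7 u) = Ys (wof u)" "Dn (wof u) \<noteq> 0"
proof -
  have "u 0 * u 1 * u 2 \<noteq> 0" "(u 3 + u 6) + \<i>*(u 5 - u 4) \<noteq> 0" "(u 3 - u 6) + \<i>*(u 4 + u 5) \<noteq> 0"
    using assms by (auto simp: Dgen_def)
  then show "\<exists>h\<in>Grp. act h (y7 u) = Ys (wof u)" "Dn (wof u) \<noteq> 0" using O1' Dn_wof by auto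
qed

lemma polyfn_G2: "polyfn (Cn 5) G2"
  unfolding G2_def by (intro polyfn.mult polyfn.add polyfn_sub polyfn.const polyfn_pow Cn5)

lemma DnG2_nz: "\<exists>w. Dn w * G2 w \<noteq> 0"
  by (rule exI[of _ "\<lambda>i. if i = 3 then 2 else if i = 4 then 0 else 1"]) (simp add: Dn_def G2_def)

definition GX0 :: "L2 set" where "GX0 = (\<Union>h\<in>Grp. act h ` X0)"

lemma X2_GX0: "X2 = zariski_closure GX0" by (simp add: X2_def GX0_def)

lemma GX0_sub: assumes "x \<in> GX0" shows "x \<in> X2"
  unfolding X2_GX0 zariski_closure_def mem_Collect_eq
proof (intro allI impI)
  fix f :: "L2 \<Rightarrow> complex" assume "\<forall>y\<in>GX0. f y = 0"
  then show "f x = 0" using assms by blast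
qed

lemma X0_GX0: assumes "x \<in> X0" shows "x \<in> GX0"
  unfolding GX0_def
  by (rule UN_I[OF Grp_one], rule image_eqI[OF act_one[symmetric] assms])

lemma y7_X2: "y7 u \<in> X2" using y7_X0 X0_GX0 GX0_sub by blast

lemma Ys_X2: "Ys w \<in> X2" unfolding Ys_def by (rule y7_X2)

lemma GX0_elim: "x \<in> GX0 \<Longrightarrow> \<exists>h\<in>Grp. \<exists>u. x = act h (y7 u)"
  unfolding GX0_def using X0_y7 by blast

lemma GX0_intro: "h \<in> Grp \<Longrightarrow> act h (y7 u) \<in> GX0"
  unfolding GX0_def using y7_X0 by blast

lemma closure_vanish:
  assumes f: "L2_poly f" and v: "\<And>h u. h \<in> Grp \<Longrightarrow> f (act h (y7 u)) = 0" and x: "x \<in> X2"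
  shows "f x = 0"
proof -
  have "\<forall>y\<in>GX0. f y = 0"
  proof
    fix y assume "y \<in> GX0"
    then obtain h u where "h \<in> Grp" "y = act h (y7 u)" using GX0_elim by blast
    then show "f y = 0" using v by simp
  qed
  moreover have "\<forall>g. L2_poly g \<longrightarrow> (\<forall>y\<in>GX0. g y = 0) \<longrightarrow> g x = 0"
    using x unfolding X2_GX0 zariski_closure_def by simp
  ultimately show ?thesis using f by blast
qed

lemma X2_stable: assumes h: "h \<in> Grp" and x: "x \<in> X2" shows "act h x \<in> X2"
proof -
  have "f (act h x) = 0" if f: "L2_poly f" and v: "\<forall>y\<in>GX0. f y = 0" for f
  proof -
    have "L2_poly (\<lambda>x. f (act h x))" by (rule L2_poly_act[OF f])
    moreover have "\<forall>y\<in>GX0. f (act h y) = 0"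
    proof
      fix y assume "y \<in> GX0"
      then obtain k u where k: "k \<in> Grp" "y = act k (y7 u)" using GX0_elim by blast
      then have "act h y = act (gmult h k) (y7 u)" using act_comp[OF h k(1)] by simp
      then show "f (act h y) = 0" using v GX0_intro[OF Grp_mult[OF h k(1)]] by simp
    qed
    moreover have "\<forall>g. L2_poly g \<longrightarrow> (\<forall>y\<in>GX0. g y = 0) \<longrightarrow> g x = 0"
      using x unfolding X2_GX0 zariski_closure_def by simp
    ultimately show ?thesis by blast
  qed
  then show ?thesis unfolding X2_GX0 zariski_closure_def by simp
qed

lemma poly5_local: "poly5 P \<Longrightarrow> (\<And>i. i < 5 \<Longrightarrow> z i = z' i) \<Longrightarrow> P z = P z'"
  unfolding poly5_Cn by (rule polyfn_Cn_local)

lemma pmap_Ys_P: "poly5 P \<Longrightarrow> Dn w \<noteq> 0 \<Longrightarrow> P (pmap (Ys w)) = P (S2 w)"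
  using poly5_local pmap_Ys by blast

lemma S2_surj:
  assumes "z 0 * z 1 * z 2 \<noteq> 0"
  shows "S2 (z(0 := csqrt (z 0), 1 := csqrt (z 1))) = z" "Dn (z(0 := csqrt (z 0), 1 := csqrt (z 1))) \<noteq> 0"
  using assms by (auto simp: S2_def sqk_def Dn_def fun_eq_iff)

theorem part_indep: "alg_indep_on_X2"
  unfolding alg_indep_on_X2_def
proof (intro allI impI)
  fix P :: "(nat \<Rightarrow> complex) \<Rightarrow> complex" and z
  assume P: "poly5 P" and v: "\<forall>x\<in>X2. P (pmap x) = 0"
  have "P y = 0" if "Dn y \<noteq> 0" for y
  proof -
    let ?w = "y(0 := csqrt (y 0), 1 := csqrt (y 1))"
    have "y 0 * y 1 * y 2 \<noteq> 0" using that by (simp add: Dn_def)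
    note s = S2_surj[OF this]
    have "P (pmap (Ys ?w)) = 0" using v Ys_X2 by blast
    then show ?thesis using pmap_Ys_P[OF P s(2)] s(1) by simp
  qed
  moreover have "Dn (\<lambda>_. 1) \<noteq> 0" by (simp add: Dn_def)
  ultimately show "P z = 0" using polyfn_vanish[of 5 P Dn] P polyfn_Dn by (auto simp: poly5_Cn)
qed

lemma L2_poly_comp_pmap: "poly5 B \<Longrightarrow> polyfn (Cn 7) (\<lambda>u. B (pmap (y7 u)))"
  by (intro polyfn_y7 L2_poly_pmap)

theorem part_rev:
  assumes fg: "rat_fun f g" and cp: "in_Cp f g"
  shows "G_invariant f g"
proof -
  have f: "L2_poly f" and g: "L2_poly g" using fg by (auto simp: rat_fun_def)
  obtain A B where AB: "poly5 A" "poly5 B" "\<not> (\<forall>x\<in>X2. B (pmap x) = 0)"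
    "\<forall>x\<in>X2. f x * B (pmap x) = A (pmap x) * g x"
    using cp unfolding in_Cp_def rat_eq_def by auto
  have LB: "L2_poly (\<lambda>x. B (pmap x))" by (rule L2_poly_pmap[OF AB(2)])
  obtain k0 u0 where k0: "k0 \<in> Grp" "B (pmap (act k0 (y7 u0))) \<noteq> 0"
    using AB(3) closure_vanish[OF LB] by blast
  have Bnz: "B (pmap (y7 u0)) \<noteq> 0" using k0 pmap_inv by metis
  show ?thesis unfolding G_invariant_def rat_eq_def
  proof (intro ballI)
    fix h x assume h: "h \<in> Grp" and x: "x \<in> X2"
    define E where "E y = f (act h y) * g y - f y * g (act h y)" for y
    have LE: "L2_poly E" unfolding E_def
      by (intro L2_poly_sub L2_poly_mult L2_poly_act f g)
    have prod: "B (pmap y) * E y = 0" if y: "y \<in> X2" for y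
    proof -
      have hy: "act h y \<in> X2" by (rule X2_stable[OF h y])
      have e1: "f y * B (pmap y) = A (pmap y) * g y" using AB(4) y by blast
      have e2: "f (act h y) * B (pmap y) = A (pmap y) * g (act h y)"
        using AB(4) hy pmap_inv[OF h] by metis
      have "B (pmap y) * E y = (f (act h y) * B (pmap y)) * g y - (f y * B (pmap y)) * g (act h y)"
        by (simp add: E_def algebra_simps)
      also have "\<dots> = 0" by (simp add: e1 e2)
      finally show ?thesis .
    qed
    have "E y = 0" if "y \<in> X2" for y
    proof (rule closure_vanish[OF LE _ that])
      fix k u assume k: "k \<in> Grp"
      have p1: "polyfn (Cn 7) (\<lambda>u. E (act k (y7 u)))" by (intro polyfn_y7 L2_poly_act LE)
      have p2: "polyfn (Cn 7) (\<lambda>u. B (pmap (y7 u)))" by (rule L2_poly_comp_pmap[OF AB(2)])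
      have "B (pmap (y7 u)) * E (act k (y7 u)) = 0" for u
        using prod[OF X2_stable[OF k y7_X2]] pmap_inv[OF k] by metis
      then show "E (act k (y7 u)) = 0" using polyfn_prod_zero[OF p1 p2 Bnz] by blast
    qed
    then show "(f \<circ> act h) x * g x = f x * (g \<circ> act h) x" using x by (simp add: E_def)
  qed
qed

lemma inv_transfer:
  assumes inv: "G_invariant f g" and hs: "hs \<in> Grp" and k: "k \<in> Grp" and kw: "act k (Ys w) = Ys w'"
  shows "f (act hs (Ys w')) * g (act hs (Ys w)) = f (act hs (Ys w)) * g (act hs (Ys w'))"
proof -
  define k' where "k' = gmult hs (gmult k (ginv hs))"
  have k': "k' \<in> Grp" unfolding k'_def by (intro Grp_mult Grp_inv hs k)
  have x: "act hs (Ys w) \<in> X2" by (rule X2_stable[OF hs Ys_X2])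
  have "act k' (act hs (Ys w)) = act hs (act (gmult k (ginv hs)) (act hs (Ys w)))"
    unfolding k'_def by (rule act_comp[symmetric, OF hs Grp_mult[OF k Grp_inv[OF hs]]])
  also have "\<dots> = act hs (act k (act (ginv hs) (act hs (Ys w))))"
    by (simp add: act_comp[OF k Grp_inv[OF hs]])
  also have "\<dots> = act hs (Ys w')" using act_inv[OF hs] kw by simp
  finally have e: "act k' (act hs (Ys w)) = act hs (Ys w')" .
  have "f (act k' (act hs (Ys w))) * g (act hs (Ys w)) = f (act hs (Ys w)) * g (act k' (act hs (Ys w)))"
    using inv k' x unfolding G_invariant_def rat_eq_def by auto
  then show ?thesis using e by simp
qed

lemma E_transfer:
  assumes inv: "G_invariant f g" and k: "k \<in> Grp" and x: "x \<in> X2"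
  shows "g x * (f (act k x) * B (pmap (act k x)) - A (pmap (act k x)) * g (act k x))
       = g (act k x) * (f x * B (pmap x) - A (pmap x) * g x)"
proof -
  have i: "f (act k x) * g x = f x * g (act k x)"
    using inv k x unfolding G_invariant_def rat_eq_def by auto
  have p: "pmap (act k x) = pmap x" by (rule pmap_inv[OF k])
  show ?thesis unfolding p using i by (simp add: algebra_simps)
qed

lemma Dn_ngk: "Dn (ngk 0 w) = - Dn w" "Dn (ngk 1 w) = - Dn w"
  by (simp_all add: Dn_def ngk_def)

theorem part_fwd:
  assumes fg: "rat_fun f g" and inv: "G_invariant f g"
  shows "in_Cp f g"
proof -
  have f: "L2_poly f" and g: "L2_poly g" and gnz: "\<not> (\<forall>x\<in>X2. g x = 0)"
    using fg by (auto simp: rat_fun_def)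
  obtain h0 u0 where h0: "h0 \<in> Grp" "g (act h0 (y7 u0)) \<noteq> 0"
    using gnz closure_vanish[OF g] by blast
  have pg: "polyfn (Cn 7) (\<lambda>u. g (act h0 (y7 u)))" by (intro polyfn_y7 L2_poly_act g)
  obtain ud where "Dgen ud \<noteq> 0" using Dgen_nz by blast
  then obtain u1 where u1: "g (act h0 (y7 u1)) * Dgen u1 \<noteq> 0"
    using prod_nonzero[OF pg polyfn_Dgen h0(2)] by blast
  then have "Dgen u1 \<noteq> 0" by simp
  from Dgen_O[OF this] obtain n where n: "n \<in> Grp" "act n (y7 u1) = Ys (wof u1)" and w1: "Dn (wof u1) \<noteq> 0"
    by blast
  define w1 where "w1 = wof u1"
  define hs where "hs = gmult h0 (ginv n)"
  have hs: "hs \<in> Grp" unfolding hs_def by (intro Grp_mult Grp_inv h0(1) n(1))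
  have "act hs (Ys w1) = act h0 (act (ginv n) (act n (y7 u1)))"
    unfolding hs_def w1_def n(2) by (simp add: act_comp h0(1) Grp_inv n(1))
  then have hsw1: "act hs (Ys w1) = act h0 (y7 u1)" using act_inv[OF n(1)] by simp
  have gs: "g (act hs (Ys w1)) \<noteq> 0" using u1 hsw1 by simp
  have Dw1: "Dn w1 \<noteq> 0" using w1 by (simp add: w1_def)
  obtain N1 F1 where F1: "polyfn (Cn 5) F1" "\<forall>w. Dn w \<noteq> 0 \<longrightarrow> f (act hs (Ys w)) * ((Dn w)^2)^N1 = F1 w"
    using polyfn_Ys[OF L2_poly_act[OF f]] by blast
  obtain N2 G1 where G1: "polyfn (Cn 5) G1" "\<forall>w. Dn w \<noteq> 0 \<longrightarrow> g (act hs (Ys w)) * ((Dn w)^2)^N2 = G1 w"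
    using polyfn_Ys[OF L2_poly_act[OF g]] by blast
  define M where "M w = ((Dn w)^2)^(N1+N2)" for w
  define Fh where "Fh w = F1 w * ((Dn w)^2)^N2" for w
  define Gh where "Gh w = G1 w * ((Dn w)^2)^N1" for w
  have pFh: "polyfn (Cn 5) Fh" unfolding Fh_def by (intro polyfn.mult polyfn_pow F1(1) polyfn_Dn2)
  have pGh: "polyfn (Cn 5) Gh" unfolding Gh_def by (intro polyfn.mult polyfn_pow G1(1) polyfn_Dn2)
  have Fh_eq: "Fh w = f (act hs (Ys w)) * M w" if "Dn w \<noteq> 0" for w
    using F1(2) that by (simp add: Fh_def M_def power_add)
  have Gh_eq: "Gh w = g (act hs (Ys w)) * M w" if "Dn w \<noteq> 0" for w
    using G1(2) that by (simp add: Gh_def M_def power_add mult.commute mult.left_commute)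
  have M0: "M w \<noteq> 0" if "Dn w \<noteq> 0" for w using that by (simp add: M_def)
  have Mngk: "M (ngk 0 w) = M w" "M (ngk 1 w) = M w" for w unfolding M_def Dn_ngk by simp_all
  have Ghnz: "Gh w1 \<noteq> 0" using Gh_eq[OF Dw1] gs M0[OF Dw1] by simp
  have inv0: "Fh (ngk 0 w) * Gh w = Fh w * Gh (ngk 0 w)" for w
  proof -
    have pX: "polyfn (Cn 5) (\<lambda>w. Fh (ngk 0 w) * Gh w - Fh w * Gh (ngk 0 w))"
      by (intro polyfn_sub polyfn.mult polyfn_ngk pFh pGh)
    have "Fh (ngk 0 w) * Gh w - Fh w * Gh (ngk 0 w) = 0" if "Dn w \<noteq> 0" for w
    proof -
      have d: "Dn (ngk 0 w) \<noteq> 0" using that Dn_ngk by simp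
      have k: "(Sg, mat 1) \<in> Grp" by (simp add: Grp_def Sg_SO3 SO3_one)
      have "f (act hs (Ys (ngk 0 w))) * g (act hs (Ys w)) = f (act hs (Ys w)) * g (act hs (Ys (ngk 0 w)))"
        by (rule inv_transfer[OF inv hs k sigma1[OF that]])
      then show ?thesis using Fh_eq[OF that] Gh_eq[OF that] Fh_eq[OF d] Gh_eq[OF d] Mngk
        by (simp add: algebra_simps)
    qed
    then show ?thesis using polyfn_vanish[OF pX polyfn_Dn Dw1] by simp
  qed
  have inv1: "Fh (ngk 1 w) * Gh w = Fh w * Gh (ngk 1 w)" for w
  proof -
    have pX: "polyfn (Cn 5) (\<lambda>w. Fh (ngk 1 w) * Gh w - Fh w * Gh (ngk 1 w))"
      by (intro polyfn_sub polyfn.mult polyfn_ngk pFh pGh)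
    have pD: "polyfn (Cn 5) (\<lambda>w. Dn w * G2 w)" by (intro polyfn.mult polyfn_Dn polyfn_G2)
    obtain wd where wd: "Dn wd * G2 wd \<noteq> 0" using DnG2_nz by blast
    have "Fh (ngk 1 w) * Gh w - Fh w * Gh (ngk 1 w) = 0" if "Dn w * G2 w \<noteq> 0" for w
    proof -
      have dw: "Dn w \<noteq> 0" "G2 w \<noteq> 0" using that by auto
      have d: "Dn (ngk 1 w) \<noteq> 0" using dw Dn_ngk by simp
      obtain k where k: "k \<in> Grp" "act k (Ys w) = Ys (ngk 1 w)" using sigma2[OF dw] by blast
      have "f (act hs (Ys (ngk 1 w))) * g (act hs (Ys w)) = f (act hs (Ys w)) * g (act hs (Ys (ngk 1 w)))"
        by (rule inv_transfer[OF inv hs k])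
      then show ?thesis using Fh_eq[OF dw(1)] Gh_eq[OF dw(1)] Fh_eq[OF d] Gh_eq[OF d] Mngk
        by (simp add: algebra_simps)
    qed
    then show ?thesis using polyfn_vanish[OF pX pD wd] by simp
  qed
  obtain A B where AB: "polyfn (Cn 5) A" "polyfn (Cn 5) B" "\<exists>z. B z \<noteq> 0"
    "\<forall>w. Fh w * B (sqk 1 (sqk 0 w)) = A (sqk 1 (sqk 0 w)) * Gh w"
    using descent2[OF pFh pGh Ghnz, of 0 1] inv0 inv1 by auto
  have A5: "poly5 A" and B5: "poly5 B" using AB(1,2) by (simp_all add: poly5_Cn)
  define E where "E y = f y * B (pmap y) - A (pmap y) * g y" for y
  have LE: "L2_poly E" unfolding E_def
    by (intro L2_poly_sub L2_poly_mult f g L2_poly_pmap A5 B5)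
  have E_hs: "E (act hs (Ys w)) = 0" if "Dn w \<noteq> 0" for w
  proof -
    have pm: "pmap (act hs (Ys w)) = pmap (Ys w)" by (rule pmap_inv[OF hs])
    have "M w * E (act hs (Ys w)) = Fh w * B (S2 w) - A (S2 w) * Gh w"
      unfolding E_def pm pmap_Ys_P[OF A5 that] pmap_Ys_P[OF B5 that] Fh_eq[OF that] Gh_eq[OF that]
      by (simp add: algebra_simps)
    also have "\<dots> = 0" using AB(4) by (simp add: S2_def)
    finally show ?thesis using M0[OF that] by simp
  qed
  have E_any: "E (act h (Ys w)) = 0" if h: "h \<in> Grp" and dw: "Dn w \<noteq> 0" for h w
  proof -
    obtain N3 Eh where Eh: "polyfn (Cn 5) Eh" "\<forall>w. Dn w \<noteq> 0 \<longrightarrow> E (act h (Ys w)) * ((Dn w)^2)^N3 = Eh w"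
      using polyfn_Ys[OF L2_poly_act[OF LE]] by blast
    have pGE: "polyfn (Cn 5) (\<lambda>w. Gh w * Eh w)" by (intro polyfn.mult pGh Eh(1))
    have "Gh v * Eh v = 0" if "Dn v \<noteq> 0" for v
    proof -
      define k where "k = gmult hs (ginv h)"
      have k: "k \<in> Grp" unfolding k_def by (intro Grp_mult Grp_inv hs h)
      have "act k (act h (Ys v)) = act hs (act (ginv h) (act h (Ys v)))"
        unfolding k_def by (rule act_comp[symmetric, OF hs Grp_inv[OF h]])
      also have "\<dots> = act hs (Ys v)" by (simp only: act_inv[OF h])
      finally have kx: "act k (act h (Ys v)) = act hs (Ys v)" .
      have "g (act h (Ys v)) * E (act k (act h (Ys v))) = g (act k (act h (Ys v))) * E (act h (Ys v))"
        using E_transfer[OF inv k X2_stable[OF h Ys_X2]] unfolding E_def by simp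
      then have z: "g (act hs (Ys v)) * E (act h (Ys v)) = 0" using kx E_hs[OF that] by simp
      have e: "Eh v = E (act h (Ys v)) * ((Dn v)^2)^N3" using Eh(2) that by simp
      have eq: "Gh v * Eh v = (g (act hs (Ys v)) * E (act h (Ys v))) * (M v * ((Dn v)^2)^N3)"
        unfolding e Gh_eq[OF that] by (simp only: ac_simps)
      show ?thesis by (simp only: eq z mult_zero_left)
    qed
    then have "Gh v * Eh v = 0" for v using polyfn_vanish[OF pGE polyfn_Dn Dw1] by blast
    then have "Eh v = 0" for v using polyfn_prod_zero[OF Eh(1) pGh Ghnz] by blast
    then show ?thesis using Eh(2) dw by simp
  qed
  have E_y7: "E (act h (y7 u)) = 0" if h: "h \<in> Grp" for h u
  proof -
    have pE: "polyfn (Cn 7) (\<lambda>u. E (act h (y7 u)))" by (intro polyfn_y7 L2_poly_act LE)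
    have "E (act h (y7 u)) = 0" if du: "Dgen u \<noteq> 0" for u
    proof -
      obtain n' where n': "n' \<in> Grp" "act n' (y7 u) = Ys (wof u)" using Dgen_O(1)[OF du] by blast
      have "act h (y7 u) = act h (act (ginv n') (act n' (y7 u)))" using act_inv[OF n'(1)] by simp
      also have "\<dots> = act (gmult h (ginv n')) (Ys (wof u))" using act_comp[OF h Grp_inv[OF n'(1)]] n'(2) by simp
      finally show ?thesis using E_any[OF Grp_mult[OF h Grp_inv[OF n'(1)]] Dgen_O(2)[OF du]] by simp
    qed
    then show ?thesis using polyfn_vanish[OF pE polyfn_Dgen \<open>Dgen ud \<noteq> 0\<close>] by blast
  qed
  have Eall: "\<forall>x\<in>X2. E x = 0" using closure_vanish[OF LE E_y7] by blast
  have Bnz: "\<not> (\<forall>x\<in>X2. B (pmap x) = 0)"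
  proof
    assume allz: "\<forall>x\<in>X2. B (pmap x) = 0"
    obtain zb where "B zb \<noteq> 0" using AB(3) by blast
    moreover have "Dn (\<lambda>_. 1) \<noteq> 0" by (simp add: Dn_def)
    ultimately obtain z where z: "B z * Dn z \<noteq> 0" using prod_nonzero[OF AB(2) polyfn_Dn] by blast
    then have "z 0 * z 1 * z 2 \<noteq> 0" by (simp add: Dn_def)
    note s = S2_surj[OF this]
    have "B (pmap (Ys (z(0 := csqrt (z 0), 1 := csqrt (z 1))))) = 0" using allz Ys_X2 by blast
    then have "B z = 0" using pmap_Ys_P[OF B5 s(2)] s(1) by simp
    with z show False by simp
  qed
  show ?thesis unfolding in_Cp_def rat_eq_def
    using A5 B5 Bnz Eall by (intro exI[of _ A] exI[of _ B]) (auto simp: E_def)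
qed

theorem corollaryB7:
  shows "alg_indep_on_X2 \<and>
    (\<forall>f g. rat_fun f g \<longrightarrow> (G_invariant f g \<longleftrightarrow> in_Cp f g))"
  using part_indep part_fwd part_rev by blast

end
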